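(* Let $\mathcal{C}\subseteq\mathbb{F}_q^n$ be an MDS code with $|\mathcal{C}|=q^k\ge 2$ and minimum distance $d=n-k+1$. Then the minimum-distance graph $G(\mathcal{C})$ is connected.
   Context: $d(\cdot,\cdot)$ is Hamming distance. An $(n,M,d)_q$ code is MDS if $M=q^{n-d+1}$. The minimum-distance graph $G(\mathcal{C})$ has vertex set $\mathcal{C}$, with distinct $c_1,c_2$ adjacent iff $d(c_1,c_2)$ equals the minimum distance of $\mathcal{C}$. *)

theory Defs
  imports Main
begin

definition hamming :: "'a list \<Rightarrow> 'a list \<Rightarrow> nat" where
  "hamming x y = card {i. i < length x \<and> x ! i \<noteq> y ! i}"

definition min_dist :: "'a list set \<Rightarrow> nat" where
  "min_dist C = Min {hamming x y | x y. x \<in> C \<and> y \<in> C \<and> x \<noteq> y}"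

definition mds_code :: "nat \<Rightarrow> 'a list set \<Rightarrow> bool" where
  "mds_code n C \<longleftrightarrow> (\<forall>c\<in>C. length c = n) \<and>
     card C = card (UNIV :: 'a set) ^ (n - min_dist C + 1)"

definition md_edges :: "'a list set \<Rightarrow> ('a list \<times> 'a list) set" where
  "md_edges C = {(x, y). x \<in> C \<and> y \<in> C \<and> x \<noteq> y \<and> hamming x y = min_dist C}"

definition md_graph_connected :: "'a list set \<Rightarrow> bool" where
  "md_graph_connected C \<longleftrightarrow> (\<forall>x\<in>C. \<forall>y\<in>C. (x, y) \<in> (md_edges C)\<^sup>*)"

end

theory Submission
  imports Defs
begin

lemma hamming_ge_min:
  assumes "finite C" "x \<in> C" "y \<in> C" "x \<noteq> y"
  shows "min_dist C \<le> hamming x y"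
proof -
  have "{hamming x y | x y. x \<in> C \<and> y \<in> C \<and> x \<noteq> y} \<subseteq> (\<lambda>(a,b). hamming a b) ` (C \<times> C)"
    by auto
  hence fin: "finite {hamming x y | x y. x \<in> C \<and> y \<in> C \<and> x \<noteq> y}"
    using assms(1) by (meson finite_SigmaI finite_imageI finite_subset)
  show ?thesis unfolding min_dist_def
    by (rule Min_le[OF fin]) (use assms in blast)
qed

lemma card_split:
  fixes x y :: "'a list"
  shows "card {i. i < n \<and> x ! i \<noteq> y ! i} + card {i. i < n \<and> x ! i = y ! i} = n"
proof -
  have "card ({i. i < n \<and> x ! i \<noteq> y ! i} \<union> {i. i < n \<and> x ! i = y ! i}) =
        card {i. i < n \<and> x ! i \<noteq> y ! i} + card {i. i < n \<and> x ! i = y ! i}"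
    by (rule card_Un_disjoint) auto
  moreover have "{i. i < n \<and> x ! i \<noteq> y ! i} \<union> {i. i < n \<and> x ! i = y ! i} = {..<n}" by auto
  ultimately show ?thesis by simp
qed

lemma agree_le:
  assumes len: "\<forall>c\<in>C. length c = n" and fin: "finite C"
    and xy: "x \<in> C" "y \<in> C" "x \<noteq> y" and md: "min_dist C = n - k + 1" and kn: "k \<le> n"
  shows "card {i. i < n \<and> x ! i = y ! i} \<le> k - 1"
proof -
  have "min_dist C \<le> hamming x y" using hamming_ge_min[OF fin xy] .
  moreover have "hamming x y = card {i. i < n \<and> x ! i \<noteq> y ! i}"
    unfolding hamming_def using len xy by simp
  ultimately show ?thesis using card_split[of n x y] md kn by linarith
qed

theorem theorem9:
  fixes C :: "('a::{finite, field}) list set" and n k :: nat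
  assumes "\<forall>c\<in>C. length c = n"
    and "mds_code n C"
    and "card C = card (UNIV :: 'a set) ^ k" and "card C \<ge> 2"
    and "min_dist C = n - k + 1"
  shows "md_graph_connected C"
proof -
  note len = assms(1) and md = assms(5)
  define q where "q = card (UNIV :: 'a set)"
  have q2: "q \<ge> 2"
  proof -
    have "{0::'a, 1} \<subseteq> UNIV" by simp
    hence "card {0::'a, 1} \<le> q" unfolding q_def by (rule card_mono[OF finite_UNIV])
    thus ?thesis by simp
  qed
  have fin: "finite C" using assms(4) by (intro card_ge_0_finite) simp
  have "C \<subseteq> {xs. set xs \<subseteq> UNIV \<and> length xs = n}" using len by auto
  hence "card C \<le> card {xs. set xs \<subseteq> (UNIV::'a set) \<and> length xs = n}"
    by (rule card_mono[OF finite_lists_length_eq[OF finite_UNIV]])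
  also have "\<dots> = q ^ n" unfolding q_def by (rule card_lists_length_eq[OF finite_UNIV])
  finally have "card C \<le> q ^ n" .
  hence "q ^ k \<le> q ^ n" using assms(3) q_def by simp
  hence kn: "k \<le> n" using q2 by (simp add: power_increasing_iff)
  have k1: "k \<ge> 1" using assms(3,4) q_def by (cases k) auto
  have surj: "\<exists>c\<in>C. map (nth c) idx = w"
    if "distinct idx" "length idx = k" "set idx \<subseteq> {..<n}" "length w = k" for idx and w :: "'a list"
  proof -
    let ?f = "\<lambda>c. map (nth c) idx"
    have inj: "inj_on ?f C"
    proof (rule inj_onI, rule ccontr)
      fix x y assume xy: "x \<in> C" "y \<in> C" "?f x = ?f y" "x \<noteq> y"
      have "set idx \<subseteq> {i. i < n \<and> x ! i = y ! i}"
      proof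
        fix i assume i: "i \<in> set idx"
        thus "i \<in> {i. i < n \<and> x ! i = y ! i}" using xy(3) that(3) by auto
      qed
      hence "card (set idx) \<le> card {i. i < n \<and> x ! i = y ! i}" by (intro card_mono) auto
      moreover have "card (set idx) = k" using that distinct_card by metis
      ultimately show False using agree_le[OF len fin xy(1,2,4) md kn] k1 by linarith
    qed
    have sub: "?f ` C \<subseteq> {xs. set xs \<subseteq> UNIV \<and> length xs = k}" using that by auto
    have "card (?f ` C) = q ^ k" using card_image[OF inj] assms(3) q_def by simp
    hence "?f ` C = {xs. set xs \<subseteq> UNIV \<and> length xs = k}"
      using card_subset_eq[OF finite_lists_length_eq[OF finite_UNIV] sub]
        card_lists_length_eq[OF finite_UNIV] q_def by metis
    moreover have "w \<in> {xs. set xs \<subseteq> UNIV \<and> length xs = k}" using that(4) by simp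
    ultimately have "w \<in> ?f ` C" by (simp only:)
    then obtain c where "c \<in> C" "w = ?f c" by (rule imageE)
    thus ?thesis by blast
  qed
  have main: "\<forall>x y. x \<in> C \<longrightarrow> y \<in> C \<longrightarrow> hamming x y = t \<longrightarrow> (x, y) \<in> (md_edges C)\<^sup>*" for t
  proof (induction t rule: less_induct)
    case (less t)
    show ?case
    proof (intro allI impI)
      fix x y assume x: "x \<in> C" and y: "y \<in> C" and t: "hamming x y = t"
      show "(x, y) \<in> (md_edges C)\<^sup>*"
      proof (cases "x = y")
        case True thus ?thesis by simp
      next
        case False
        define A where "A = {i. i < n \<and> x ! i = y ! i}"
        define D where "D = {i. i < n \<and> x ! i \<noteq> y ! i}"
        have tD: "t = card D" using t len x unfolding hamming_def D_def by simp
        have cA: "card A \<le> k - 1" unfolding A_def using agree_le[OF len fin x y False md kn] .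
        obtain S where S: "A \<subseteq> S" "S \<subseteq> {..<n}" "card S = k - 1"
        proof -
          have "\<exists>B. A \<subseteq> B \<and> B \<subseteq> {..<n} \<and> card B = k - 1"
            by (rule exists_subset_between) (use cA kn in \<open>auto simp: A_def\<close>)
          thus ?thesis using that by blast
        qed
        have finS: "finite S" using S(2) finite_subset by blast
        have "card ({..<n} - S) = n - (k - 1)" using S(2,3) by (simp add: card_Diff_subset finS)
        hence "card ({..<n} - S) > 0" using kn k1 by simp
        hence "{..<n} - S \<noteq> {}" by (metis card.empty less_irrefl)
        then obtain j where j: "j < n" "j \<notin> S" by auto
        have jD: "j \<in> D" using j S(1) unfolding A_def D_def by auto
        define idx where "idx = sorted_list_of_set (insert j S)"
        have fi: "finite (insert j S)" using finS by simp
        have is1: "distinct idx" "set idx = insert j S" unfolding idx_def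
          by (rule distinct_sorted_list_of_set, rule set_sorted_list_of_set[OF fi])
        have "length idx = card (insert j S)" unfolding idx_def by (rule length_sorted_list_of_set)
        also have "\<dots> = k" using card_insert_disjoint[OF finS j(2)] S(3) k1 by simp
        finally have is2: "length idx = k" .
        have is3: "set idx \<subseteq> {..<n}" using is1 S(2) j(1) by auto
        define w where "w = map (\<lambda>i. if i = j then y ! i else x ! i) idx"
        have lw: "length w = k" unfolding w_def using is2 by simp
        from surj[OF is1(1) is2 is3 lw] obtain z where z: "z \<in> C" "map (nth z) idx = w" by blast
        have zi: "z ! i = (if i = j then y ! i else x ! i)" if "i \<in> insert j S" for i
          using z(2) that is1(2) unfolding w_def map_eq_conv by blast
        have zx: "z \<noteq> x" using zi[of j] jD unfolding D_def by auto
        have lz: "length z = n" "length x = n" "length y = n" using len z x y by auto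
        have hxz: "hamming x z = n - k + 1"
        proof -
          have "{i. i < n \<and> x ! i \<noteq> z ! i} \<subseteq> {..<n} - S"
          proof
            fix i assume i: "i \<in> {i. i < n \<and> x ! i \<noteq> z ! i}"
            show "i \<in> {..<n} - S"
            proof (rule ccontr)
              assume "i \<notin> {..<n} - S"
              hence "i \<in> S" "i \<noteq> j" using i j by auto
              thus False using zi[of i] i by auto
            qed
          qed
          hence "card {i. i < n \<and> x ! i \<noteq> z ! i} \<le> card ({..<n} - S)"
            by (intro card_mono) auto
          hence "card {i. i < n \<and> x ! i \<noteq> z ! i} \<le> n - (k - 1)"
            using \<open>card ({..<n} - S) = n - (k - 1)\<close> by simp
          moreover have "min_dist C \<le> hamming x z" using hamming_ge_min[OF fin x z(1) zx[symmetric]] .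
          ultimately show ?thesis using md lz kn k1 unfolding hamming_def by simp
        qed
        have edge: "(x, z) \<in> md_edges C" unfolding md_edges_def using x z(1) zx hxz md by auto
        have "{i. i < n \<and> z ! i \<noteq> y ! i} \<subseteq> D - {j}"
        proof
          fix i assume i: "i \<in> {i. i < n \<and> z ! i \<noteq> y ! i}"
          show "i \<in> D - {j}"
          proof (cases "i \<in> A")
            case True
            hence "i \<in> insert j S" using S(1) by auto
            thus ?thesis using zi[of i] True i unfolding A_def by (auto split: if_splits)
          next
            case False
            thus ?thesis using i zi[of j] unfolding A_def D_def by (auto split: if_splits)
          qed
        qed
        hence "card {i. i < n \<and> z ! i \<noteq> y ! i} \<le> card (D - {j})"
          by (intro card_mono) (auto simp: D_def)
        moreover have "card (D - {j}) < card D" using jD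
          by (intro card_Diff1_less) (auto simp: D_def)
        ultimately have "hamming z y < t" using tD lz unfolding hamming_def by simp
        hence "(z, y) \<in> (md_edges C)\<^sup>*" using less.IH z(1) y by blast
        thus ?thesis by (rule converse_rtrancl_into_rtrancl[OF edge])
      qed
    qed
  qed
  show ?thesis unfolding md_graph_connected_def
  proof (intro ballI)
    fix x y assume "x \<in> C" "y \<in> C"
    thus "(x, y) \<in> (md_edges C)\<^sup>*" using main[of "hamming x y"] by simp
  qed
qed

end
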